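(* For every positive integer $n$, $$\int_0^1 \ln ^2(1-x)\, P_{n}(2 x-1) \, dx = \frac{4 n + 2}{n^2 (n + 1)^2}+\frac{4 H_{n - 1}}{n (n + 1)}.$$
   Context: $P_n$ denotes the $n$-th Legendre polynomial, $P_n(x) = \frac{1}{2^n n!}\frac{d^n}{dx^n}(x^2-1)^n$. $H_k = \sum_{j=1}^k \frac1j$ is the $k$-th harmonic number, with $H_0 = 0$. *)

theory Defs
  imports "HOL-Analysis.Analysis" "HOL-Computational_Algebra.Polynomial"
begin

text \<open>Legendre polynomial via Rodrigues' formula:
  P_n(x) = 1/(2^n n!) d^n/dx^n (x^2-1)^n.\<close>
definition legendre_poly :: "nat \<Rightarrow> real poly" where
  "legendre_poly n = smult (1 / (2 ^ n * fact n)) ((pderiv ^^ n) ([:-1, 0, 1:] ^ n))"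

definition legendre :: "nat \<Rightarrow> real \<Rightarrow> real" where
  "legendre n x = poly (legendre_poly n) x"

definition harm :: "nat \<Rightarrow> real" where
  "harm k = (\<Sum>j=1..k. 1 / real j)"

end

theory Submission
  imports Defs "HOL-Real_Asymp.Real_Asymp"
begin


lemma choose_ratio1: "Suc k * (n choose Suc k) = (n - k) * (n choose k)"
  using binomial_absorb_comp binomial_absorption by presburger
lemma choose_ratio2: "Suc n * (Suc n + k choose k) = Suc (n + k) * (n + k choose k)"
  by (metis add_eq_if add_implies_diff binomial_absorption
    binomial_symmetric diff_Suc_1 le_add2 nat.discI)

lemma key_comb:
  fixes n k :: nat
  shows "real (n choose Suc k) * real (n + k + 2 choose Suc k) + real (n choose k) * real (n + k + 1 choose k)
       = real (Suc n choose Suc k) * real (n + k + 1 choose Suc k)"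
proof (cases "k \<le> n")
  case False
  then show ?thesis by (simp add: binomial_eq_0 del: binomial_Suc_Suc)
next
  case True
  define X where "X = real (n choose k)"
  define Y where "Y = real (n + k choose k)"
  have e1: "real (Suc k) * real (n choose Suc k) = real (n - k) * X"
    unfolding X_def using choose_ratio1[of k n] by (metis of_nat_mult)
  have e2: "real (Suc k) * real (Suc n choose Suc k) = real (Suc n) * X"
    unfolding X_def using Suc_times_binomial[of k n] by (metis of_nat_mult)
  have e3: "real (Suc k) * real (n + k + 1 choose Suc k) = real (n + k + 1) * Y"
    unfolding Y_def using Suc_times_binomial[of k "n+k"] by (metis of_nat_mult Suc_eq_plus1)
  have e4: "real (Suc n) * real (n + k + 1 choose k) = real (n + k + 1) * Y"
    unfolding Y_def using choose_ratio2[of n k] by (metis of_nat_mult Suc_eq_plus1 add_Suc)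
  have e5: "real (Suc k) * real (n + k + 2 choose Suc k) = real (n + k + 2) * real (n + k + 1 choose k)"
    using Suc_times_binomial[of k "n+k+1"] by (metis of_nat_mult Suc_eq_plus1 add_Suc add_2_eq_Suc')
  have nk: "real (n - k) = real n - real k" using True by simp
  have "(real (Suc k))^2 * real (Suc n) * (real (n choose Suc k) * real (n + k + 2 choose Suc k) + real (n choose k) * real (n + k + 1 choose k))
     = (real (Suc k) * real (n choose Suc k)) * (real (Suc k) * real (n + k + 2 choose Suc k)) * real (Suc n)
       + (real (Suc k))^2 * X * (real (Suc n) * real (n + k + 1 choose k))"
    unfolding X_def by (simp add: algebra_simps power2_eq_square)
  also have "\<dots> = real (n - k) * X * (real (n + k + 2) * (real (Suc n) * real (n + k + 1 choose k)))
       + (real (Suc k))^2 * X * (real (Suc n) * real (n + k + 1 choose k))"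
    by (simp only: e1 e5) (simp only: mult_ac)
  also have "\<dots> = real (n - k) * X * (real (n + k + 2) * (real (n + k + 1) * Y))
       + (real (Suc k))^2 * X * (real (n + k + 1) * Y)"
    by (simp only: e4)
  also have "\<dots> = (real (Suc k) * real (Suc n choose Suc k)) * (real (Suc k) * real (n + k + 1 choose Suc k)) * real (Suc n)"
    unfolding e2 e3 nk by (simp add: algebra_simps power2_eq_square)
  finally have "(real (Suc k))^2 * real (Suc n) * (real (n choose Suc k) * real (n + k + 2 choose Suc k) + real (n choose k) * real (n + k + 1 choose k))
     = (real (Suc k))^2 * real (Suc n) * (real (Suc n choose Suc k) * real (n + k + 1 choose Suc k))"
    by (simp add: algebra_simps power2_eq_square)
  then show ?thesis by (simp del: of_nat_Suc)
qed
declare binomial_Suc_Suc[simp del]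

lemma partial_S:
  "(\<Sum>k\<le>m. (-1)^k * real (Suc n choose k) * real (n + k choose k))
     = (-1)^m * real (n choose m) * real (Suc n + m choose m)"
proof (induction m)
  case 0
  then show ?case by simp
next
  case (Suc m)
  have kc: "real (n choose Suc m) * real (n + m + 2 choose Suc m) + real (n choose m) * real (n + m + 1 choose m)
       = real (Suc n choose Suc m) * real (n + m + 1 choose Suc m)" by (rule key_comb)
  have "(\<Sum>k\<le>Suc m. (-1)^k * real (Suc n choose k) * real (n + k choose k))
     = (-1)^m * real (n choose m) * real (Suc n + m choose m) + (-1)^(Suc m) * real (Suc n choose Suc m) * real (n + Suc m choose Suc m)"
    using Suc.IH by simp
  also have "\<dots> = (-1)^m * (real (n choose m) * real (n + m + 1 choose m) - real (Suc n choose Suc m) * real (n + m + 1 choose Suc m))"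
    by (simp add: algebra_simps)
  also have "\<dots> = (-1)^Suc m * (real (n choose Suc m) * real (n + m + 2 choose Suc m))"
    unfolding kc[symmetric] by (simp add: algebra_simps)
  finally show ?case by (simp add: add.commute add.left_commute)
qed

lemma S_zero: "(\<Sum>k\<le>Suc n. (-1)^k * real (Suc n choose k) * real (n + k choose k)) = 0"
  using partial_S[where m="Suc n" and n=n] by simp

definition aa :: "nat \<Rightarrow> nat \<Rightarrow> real" where
  "aa n k = (-1)^k * real (n choose k) * real (n + k choose k)"

definition GG :: "nat \<Rightarrow> real \<Rightarrow> real" where
  "GG n x = (\<Sum>k\<le>n. aa n k / (x + real k))"

lemma term_rec:
  fixes x :: real
  assumes "k \<le> Suc n" "x + real k \<noteq> 0"
  shows "(x + real (Suc n)) * (aa (Suc n) k / (x + real k)) - (real (Suc n) - x) * (aa n k / (x + real k))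
     = 2 * ((-1)^k * real (Suc n choose k) * real (n + k choose k))"
proof -
  define N where "N = Suc n"
  have f1: "real N * real (N + k choose k) = real (N + k) * real (n + k choose k)"
    unfolding N_def using choose_ratio2[of n k] by (metis of_nat_mult add_Suc)
  have f2: "real N * real (n choose k) = real (N - k) * real (N choose k)"
    unfolding N_def using binomial_absorb_comp[of "Suc n" k] by (metis of_nat_mult diff_Suc_1)
  have nk: "real (N - k) = real N - real k" using assms(1) unfolding N_def by simp
  have Npos: "real N \<noteq> 0" unfolding N_def by simp
  have "real N * (x + real k) * ((x + real N) * (aa N k / (x + real k)) - (real N - x) * (aa n k / (x + real k)))
     = real N * ((x + real N) * aa N k - (real N - x) * aa n k)"
  proof -
    have e: "(x + real N) * (aa N k / (x + real k)) - (real N - x) * (aa n k / (x + real k))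
       = ((x + real N) * aa N k - (real N - x) * aa n k) / (x + real k)"
      by (simp add: diff_divide_distrib)
    show ?thesis unfolding e using assms(2) by simp
  qed
  also have "\<dots> = (-1)^k * ((x + real N) * real (N choose k) * (real N * real (N + k choose k))
        - (real N - x) * (real N * real (n choose k)) * real (n + k choose k))"
    unfolding aa_def by (simp add: algebra_simps)
  also have "\<dots> = real N * (x + real k) * (2 * ((-1)^k * real (N choose k) * real (n + k choose k)))"
    unfolding f1 f2 nk by (simp add: algebra_simps)
  finally show ?thesis using Npos assms(2) unfolding N_def[symmetric] by simp
qed

lemma aa_out: "aa n (Suc n) = 0"
  unfolding aa_def by simp

lemma GG_rec:
  fixes x :: real
  assumes "x > 0"
  shows "(x + real (Suc n)) * GG (Suc n) x = (real (Suc n) - x) * GG n x"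
proof -
  have g: "GG n x = (\<Sum>k\<le>Suc n. aa n k / (x + real k))"
    unfolding GG_def by (simp add: aa_out)
  have "(x + real (Suc n)) * GG (Suc n) x - (real (Suc n) - x) * GG n x
      = (\<Sum>k\<le>Suc n. (x + real (Suc n)) * (aa (Suc n) k / (x + real k)) - (real (Suc n) - x) * (aa n k / (x + real k)))"
    by (simp only: g GG_def[of "Suc n" x] sum_distrib_left sum_subtractf)
  also have "\<dots> = (\<Sum>k\<le>Suc n. 2 * ((-1)^k * real (Suc n choose k) * real (n + k choose k)))"
    using assms by (intro sum.cong refl term_rec) auto
  also have "\<dots> = 0" by (simp only: sum_distrib_left[symmetric] S_zero mult_zero_right)
  finally show ?thesis by simp
qed

lemma GG_one: "GG (Suc n) 1 = 0"
proof (induction n)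
  case 0
  show ?case using GG_rec[of 1 0] by simp
next
  case (Suc n)
  show ?case using GG_rec[of 1 "Suc n"] Suc by simp
qed

definition KK :: "nat \<Rightarrow> real" where
  "KK n = - (\<Sum>k\<le>n. aa n k / (real k + 1)^2)"
definition LL :: "nat \<Rightarrow> real \<Rightarrow> real" where
  "LL n x = (\<Sum>k\<le>n. aa n k / ((x + real k) * (real k + 1)^2))"
definition TT :: "nat \<Rightarrow> real" where
  "TT n = (\<Sum>k\<le>n. aa n k / (real k + 1)^3)"

lemma LL_one: "LL n 1 = TT n"
  unfolding LL_def TT_def by (intro sum.cong refl) (simp add: power2_eq_square power3_eq_cube add.commute)

lemma isCont_LL: "isCont (LL n) 1"
proof -
  have "\<And>k. (1 + real k) * (real k + 1)^2 \<noteq> 0" by (simp add: add_pos_pos)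
  then show ?thesis unfolding LL_def by (intro continuous_intros) auto
qed

lemma term_decomp0:
  fixes a y c :: real
  assumes "y \<noteq> 0" "c \<noteq> 0"
  shows "a / y = a / c - (y - c) * (a / c^2) + (y - c)^2 * (a / (y * c^2))"
  using assms by (simp add: field_simps power2_eq_square; algebra)

lemma term_decomp:
  fixes x :: real and k :: nat
  assumes "x > 0"
  shows "a / (x + real k) = a / (real k + 1) - (x - 1) * (a / (real k + 1)^2)
          + (x - 1)^2 * (a / ((x + real k) * (real k + 1)^2))"
proof -
  have y: "x + real k \<noteq> 0" using assms by (simp add: add_pos_nonneg)
  have c: "real k + 1 \<noteq> 0" by simp
  have e: "x - 1 = (x + real k) - (real k + 1)" by simp
  show ?thesis unfolding e by (rule term_decomp0[OF y c])
qed

lemma GG_decomp: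
  fixes x :: real
  assumes "x > 0"
  shows "GG (Suc n) x = (x - 1) * KK (Suc n) + (x - 1)^2 * LL (Suc n) x"
proof -
  have "GG (Suc n) x = (\<Sum>k\<le>Suc n. aa (Suc n) k / (real k + 1)) - (x - 1) * (\<Sum>k\<le>Suc n. aa (Suc n) k / (real k + 1)^2)
      + (x - 1)^2 * LL (Suc n) x"
    unfolding GG_def LL_def
    by (simp only: term_decomp[OF assms] sum.distrib sum_subtractf sum_distrib_left)
  moreover have "(\<Sum>k\<le>Suc n. aa (Suc n) k / (real k + 1)) = 0"
    using GG_one[of n] unfolding GG_def by (simp add: add.commute)
  ultimately show ?thesis unfolding KK_def by (simp add: algebra_simps)
qed

lemma lim_eq:
  fixes f g :: "real \<Rightarrow> real"
  assumes "isCont f 1" "isCont g 1" "\<And>x. 1 < x \<Longrightarrow> x < 2 \<Longrightarrow> f x = g x"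
  shows "f 1 = g 1"
proof -
  have f: "(f \<longlongrightarrow> f 1) (at_right 1)" using assms(1)
    by (simp add: isCont_def filterlim_at_split)
  have g: "(g \<longlongrightarrow> g 1) (at_right 1)" using assms(2)
    by (simp add: isCont_def filterlim_at_split)
  have ev: "eventually (\<lambda>x. f x = g x) (at_right (1::real))"
    unfolding eventually_at_right_field using assms(3) by (auto intro!: exI[of _ 2])
  have "(g \<longlongrightarrow> f 1) (at_right 1)" using f ev by (rule Lim_transform_eventually)
  then show ?thesis using g by (intro tendsto_unique) auto
qed

lemma main_rec:
  fixes x :: real
  assumes "x > 0"
  shows "(x + real (Suc (Suc n))) * ((x - 1) * KK (Suc (Suc n)) + (x - 1)^2 * LL (Suc (Suc n)) x)
       = (real (Suc (Suc n)) - x) * ((x - 1) * KK (Suc n) + (x - 1)^2 * LL (Suc n) x)"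
  using GG_rec[OF assms, of "Suc n"] GG_decomp[OF assms] by simp

lemma KK_rec: "(1 + real (Suc (Suc n))) * KK (Suc (Suc n)) = (real (Suc (Suc n)) - 1) * KK (Suc n)"
proof -
  let ?N = "real (Suc (Suc n))"
  have "(\<lambda>x. (x + ?N) * (KK (Suc (Suc n)) + (x - 1) * LL (Suc (Suc n)) x)) 1
      = (\<lambda>x. (?N - x) * (KK (Suc n) + (x - 1) * LL (Suc n) x)) 1"
  proof (rule lim_eq[where f="\<lambda>x. (x + ?N) * (KK (Suc (Suc n)) + (x - 1) * LL (Suc (Suc n)) x)"
       and g="\<lambda>x. (?N - x) * (KK (Suc n) + (x - 1) * LL (Suc n) x)"])
    show "isCont (\<lambda>x. (x + ?N) * (KK (Suc (Suc n)) + (x - 1) * LL (Suc (Suc n)) x)) 1"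
      using isCont_LL by (intro continuous_intros) auto
    show "isCont (\<lambda>x. (?N - x) * (KK (Suc n) + (x - 1) * LL (Suc n) x)) 1"
      using isCont_LL by (intro continuous_intros) auto
    fix x :: real assume x: "1 < x" "x < 2"
    have "(x - 1) * ((x + ?N) * (KK (Suc (Suc n)) + (x - 1) * LL (Suc (Suc n)) x))
        = (x - 1) * ((?N - x) * (KK (Suc n) + (x - 1) * LL (Suc n) x))"
      using main_rec[of x n] x by (simp add: algebra_simps power2_eq_square)
    then show "(x + ?N) * (KK (Suc (Suc n)) + (x - 1) * LL (Suc (Suc n)) x)
        = (?N - x) * (KK (Suc n) + (x - 1) * LL (Suc n) x)" using x by simp
  qed
  then show ?thesis by simp
qed

lemma TT_rec: "KK (Suc (Suc n)) + KK (Suc n) + (1 + real (Suc (Suc n))) * TT (Suc (Suc n))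
   = (real (Suc (Suc n)) - 1) * TT (Suc n)"
proof -
  let ?N = "real (Suc (Suc n))"
  have "(\<lambda>x. KK (Suc (Suc n)) + KK (Suc n) + (x + ?N) * LL (Suc (Suc n)) x) 1
      = (\<lambda>x. (?N - x) * LL (Suc n) x) 1"
  proof (rule lim_eq)
    show "isCont (\<lambda>x. KK (Suc (Suc n)) + KK (Suc n) + (x + ?N) * LL (Suc (Suc n)) x) 1"
      using isCont_LL by (intro continuous_intros) auto
    show "isCont (\<lambda>x. (?N - x) * LL (Suc n) x) 1"
      using isCont_LL by (intro continuous_intros) auto
    fix x :: real assume x: "1 < x" "x < 2"
    have r: "(1 + ?N) * KK (Suc (Suc n)) = (?N - 1) * KK (Suc n)" by (rule KK_rec)
    have "(x - 1) * ((x + ?N) * (KK (Suc (Suc n)) + (x - 1) * LL (Suc (Suc n)) x))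
        = (x - 1) * ((?N - x) * (KK (Suc n) + (x - 1) * LL (Suc n) x))"
      using main_rec[of x n] x by (simp add: algebra_simps power2_eq_square)
    then have "(x + ?N) * (KK (Suc (Suc n)) + (x - 1) * LL (Suc (Suc n)) x)
        = (?N - x) * (KK (Suc n) + (x - 1) * LL (Suc n) x)" using x by simp
    then have "(x - 1) * (KK (Suc (Suc n)) + KK (Suc n) + (x + ?N) * LL (Suc (Suc n)) x)
        = (x - 1) * ((?N - x) * LL (Suc n) x)"
      using r by (simp add: algebra_simps)
    then show "KK (Suc (Suc n)) + KK (Suc n) + (x + ?N) * LL (Suc (Suc n)) x
        = (?N - x) * LL (Suc n) x" using x by simp
  qed
  then show ?thesis by (simp add: LL_one)
qed

lemma alg1:
  fixes a b c h :: real
  assumes "a \<noteq> 0" "b \<noteq> 0" "c \<noteq> 0" "b = a + 1" "c = a + 2"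
  shows "(a * ((2 * a + 1) / (a^2 * b^2)
   + 2 * h / (a * b)) + 1 / (b * c) + 1 / (a * b)) / c
   = (2 * a + 3) / (b^2 * c^2)
   + 2 * (h + 1 / a) / (b * c)"
proof -
  have "(a * ((2 * a + 1) / (a^2 * b^2) + 2 * h / (a * b)) + 1 / (b * c) + 1 / (a * b)) / c * (a^2 * b^2 * c^2)
     = (2 * a + 3) / (b^2 * c^2) * (a^2 * b^2 * c^2) + 2 * (h + 1 / a) / (b * c) * (a^2 * b^2 * c^2)"
    using assms(1-3) apply (simp add: field_simps power2_eq_square)
    unfolding assms(4,5) by algebra
  then have "(a * ((2 * a + 1) / (a^2 * b^2) + 2 * h / (a * b)) + 1 / (b * c) + 1 / (a * b)) / c * (a^2 * b^2 * c^2)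
     = ((2 * a + 3) / (b^2 * c^2) + 2 * (h + 1 / a) / (b * c)) * (a^2 * b^2 * c^2)"
    by (simp only: distrib_right)
  moreover have "a^2 * b^2 * c^2 \<noteq> 0" using assms(1-3) by simp
  ultimately show ?thesis using mult_right_cancel by blast
qed
lemma alg2:
  fixes a b c :: real
  assumes "a \<noteq> 0" "b \<noteq> 0" "c \<noteq> 0"
  shows "a * (- 1 / (a * b)) / c = - 1 / (b * c)"
  using assms by (simp add: field_simps)

lemma KK_closed: "KK (Suc m) = - 1 / ((real m + 1) * (real m + 2))"
proof (induction m)
  case 0
  show ?case unfolding KK_def aa_def by (simp add: numeral_2_eq_2)
next
  case (Suc m)
  have "(real m + 3) * KK (Suc (Suc m)) = (real m + 1) * KK (Suc m)"
    using KK_rec[of m] by (simp add: algebra_simps)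
  then have "KK (Suc (Suc m)) = (real m + 1) * KK (Suc m) / (real m + 3)"
    by (simp add: field_simps)
  also have "\<dots> = - 1 / ((real m + 2) * (real m + 3))"
    unfolding Suc by (rule alg2) auto
  finally show ?case by (simp add: algebra_simps)
qed

lemma TT_closed: "TT (Suc m) = (2 * (real m + 1) + 1) / ((real m + 1)^2 * (real m + 2)^2)
   + 2 * harm m / ((real m + 1) * (real m + 2))"
proof (induction m)
  case 0
  show ?case unfolding TT_def aa_def harm_def by (simp add: numeral_2_eq_2)
next
  case (Suc m)
  have h: "harm (Suc m) = harm m + 1 / (real m + 1)" unfolding harm_def by (simp add: add.commute)
  have k1: "KK (Suc m) = - 1 / ((real m + 1) * (real m + 2))" by (rule KK_closed)
  have k2: "KK (Suc (Suc m)) = - 1 / ((real m + 2) * (real m + 3))"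
    using KK_closed[of "Suc m"] by (simp add: algebra_simps)
  have "(real m + 3) * TT (Suc (Suc m)) = (real m + 1) * TT (Suc m) - KK (Suc (Suc m)) - KK (Suc m)"
    using TT_rec[of m] by (simp add: algebra_simps)
  then have "TT (Suc (Suc m)) = ((real m + 1) * TT (Suc m) - KK (Suc (Suc m)) - KK (Suc m)) / (real m + 3)"
    by (simp add: field_simps)
  also have "\<dots> = ((real m + 1) * ((2 * (real m + 1) + 1) / ((real m + 1)^2 * (real m + 2)^2)
   + 2 * harm m / ((real m + 1) * (real m + 2))) + 1 / ((real m + 2) * (real m + 3)) + 1 / ((real m + 1) * (real m + 2))) / (real m + 3)"
    unfolding Suc k1 k2 by simp
  also have "\<dots> = (2 * (real m + 1) + 3) / ((real m + 2)^2 * (real m + 3)^2)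
   + 2 * (harm m + 1 / (real m + 1)) / ((real m + 2) * (real m + 3))"
    by (rule alg1) auto
  finally show ?case unfolding h by (simp add: algebra_simps)
qed



lemma pderiv_iter_pcompose:
  "(pderiv ^^ m) (pcompose r [:1, -2::real:]) = smult ((-2)^m) (pcompose ((pderiv ^^ m) r) [:1,-2:])"
proof (induction m)
  case 0 then show ?case by simp
next
  case (Suc m)
  have "(pderiv ^^ Suc m) (pcompose r [:1, -2::real:]) = pderiv (smult ((-2)^m) (pcompose ((pderiv ^^ m) r) [:1,-2:]))"
    using Suc by simp
  also have "\<dots> = smult ((-2)^m) (pcompose (pderiv ((pderiv ^^ m) r)) [:1,-2:] * [:-2:])"
    by (simp add: pderiv_smult pderiv_pcompose pderiv_pCons)
  also have "\<dots> = smult ((-2)^Suc m) (pcompose ((pderiv ^^ Suc m) r) [:1,-2:])"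
    by (simp add: mult.commute)
  finally show ?case .
qed

lemma coeff_pderiv_iter:
  "coeff ((pderiv ^^ m) (r :: real poly)) k = fact (k + m) / fact k * coeff r (k + m)"
proof (induction m arbitrary: k)
  case 0 then show ?case by simp
next
  case (Suc m)
  have "coeff ((pderiv ^^ Suc m) r) k = real (Suc k) * coeff ((pderiv ^^ m) r) (Suc k)"
    by (simp add: coeff_pderiv)
  also have "\<dots> = real (Suc k) * (fact (Suc k + m) / fact (Suc k) * coeff r (Suc k + m))"
    using Suc by simp
  also have "\<dots> = fact (k + Suc m) / fact k * coeff r (k + Suc m)"
  proof -
    have f: "fact (Suc k) = real (Suc k) * (fact k :: real)" by simp
    have g: "Suc k + m = k + Suc m" by simp
    show ?thesis unfolding f g by simp
  qed
  finally show ?case .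
qed

lemma pcompose_power: "pcompose (p ^ n) q = (pcompose p q) ^ n"
  for p q :: "real poly"
  by (induction n) (simp_all add: pcompose_mult one_pCons pcompose_pCons)

lemma pderiv_iter_smult: "(pderiv ^^ m) (smult c p) = smult c ((pderiv ^^ m) (p :: real poly))"
  by (induction m) (simp_all add: pderiv_smult)

lemma pq_compute: "pcompose ([:-1,0,1:]^n) [:1,-2::real:] = smult (4^n) (monom 1 n * [:-1,1:]^n)"
proof -
  have a: "pcompose [:-1,0,1:] [:1,-2::real:] = smult 4 (monom 1 1 * [:-1,1:])"
    by (simp add: pcompose_pCons monom_Suc)
  show ?thesis unfolding pcompose_power a smult_power power_mult_distrib monom_power by simp
qed

lemma legendre_coeff:
  "coeff (pcompose (legendre_poly n) [:1,-2:]) k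
     = (if k \<le> n then (-1)^k * real (n choose k) * real (n + k choose k) else 0)"
proof -
  have Q: "pcompose (legendre_poly n) [:1,-2:]
     = smult (1 / (2 ^ n * fact n) / (-2)^n * 4^n) ((pderiv ^^ n) (monom 1 n * [:-1,1:]^n))"
  proof -
    have "pcompose (legendre_poly n) [:1,-2:] = smult (1 / (2 ^ n * fact n)) (pcompose ((pderiv ^^ n) ([:-1, 0, 1:] ^ n)) [:1,-2:])"
      unfolding legendre_poly_def by (simp add: pcompose_smult)
    also have "pcompose ((pderiv ^^ n) ([:-1, 0, 1:] ^ n)) [:1,-2::real:] = smult (1 / (-2)^n) ((pderiv ^^ n) (pcompose ([:-1, 0, 1:] ^ n) [:1,-2:]))"
      unfolding pderiv_iter_pcompose by simp
    also have "(pderiv ^^ n) (pcompose ([:-1, 0, 1:] ^ n) [:1,-2::real:]) = smult (4^n) ((pderiv ^^ n) (monom 1 n * [:-1,1:]^n))"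
      unfolding pq_compute by (rule pderiv_iter_smult)
    finally show ?thesis by simp
  qed
  have c4: "(1 / (2 ^ n * fact n) / (-2)^n * 4^n :: real) = (-1)^n / fact n"
  proof -
    have "(4::real)^n = 2^n * 2^n" by (simp add: power_mult_distrib[symmetric])
    moreover have "((-2)::real)^n = (-1)^n * 2^n" by (simp add: power_mult_distrib[symmetric])
    ultimately show ?thesis by (simp add: field_simps)
  qed
  have "coeff (pcompose (legendre_poly n) [:1,-2:]) k = (-1)^n / fact n * (fact (k + n) / fact k * coeff ([:-1,1:]^n) k)"
    unfolding Q coeff_smult coeff_pderiv_iter c4 coeff_monom_mult by simp
  also have "\<dots> = (if k \<le> n then (-1)^k * real (n choose k) * real (n + k choose k) else 0)"
  proof (cases "k \<le> n")
    case True
    have cl: "coeff ([:-1,1:]^n) k = real (n choose k) * (-1)^(n-k)"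
      using coeff_linear_poly_power[OF True, of "-1::real" 1] by simp
    have sg: "(-1::real)^n * (-1)^(n-k) = (-1)^k"
    proof -
      have "n + (n - k) = k + 2 * (n - k)" using True by simp
      then have "(-1::real)^n * (-1)^(n-k) = (-1)^k * ((-1)^2)^(n-k)"
        by (simp only: power_add[symmetric] power_mult[symmetric])
      then show ?thesis by simp
    qed
    have bf: "real (n + k choose k) = fact (n + k) / (fact k * fact n)"
      by (simp add: binomial_fact)
    have "(-1)^n / fact n * (fact (k + n) / fact k * (real (n choose k) * (-1)^(n-k)))
        = ((-1::real)^n * (-1)^(n-k)) * real (n choose k) * (fact (n + k) / (fact k * fact n))"
      by (simp add: add.commute field_simps)
    then show ?thesis using True unfolding cl sg bf by simp
  next
    case False
    have "coeff ([:-1,1::real:]^n) k = 0"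
    proof (rule coeff_eq_0)
      have "degree ([:-1,1::real:]^n) = n" by (rule degree_linear_power)
      then show "degree ([:-1,1::real:]^n) < k" using False by simp
    qed
    then show ?thesis using False by simp
  qed
  finally show ?thesis .
qed

lemma legendre_sum: "legendre n (1 - 2 * t) = (\<Sum>k\<le>n. (-1)^k * real (n choose k) * real (n + k choose k) * t^k)"
proof -
  have "pcompose (legendre_poly n) [:1,-2:] = (\<Sum>k\<le>n. monom ((-1)^k * real (n choose k) * real (n + k choose k)) k)"
    by (rule poly_eqI) (simp add: legendre_coeff coeff_sum coeff_monom)
  then have "legendre n (1 - 2 * t) = poly (\<Sum>k\<le>n. monom ((-1)^k * real (n choose k) * real (n + k choose k)) k) t"
  proof -
    have "poly [:1,-2:] t = 1 - 2 * t" by simp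
    then have "legendre n (1 - 2 * t) = poly (pcompose (legendre_poly n) [:1,-2:]) t"
      unfolding legendre_def poly_pcompose by (simp add: mult.commute)
    then show ?thesis using \<open>pcompose (legendre_poly n) [:1,-2:] = _\<close> by simp
  qed
  then show ?thesis by (simp add: poly_sum poly_monom)
qed



definition FF :: "nat \<Rightarrow> real \<Rightarrow> real" where
  "FF k t = t ^ (k + 1) * ((ln t)^2 / (real k + 1) - 2 * ln t / (real k + 1)^2 + 2 / (real k + 1)^3)"

lemma FF_alg:
  fixes t L T r K :: real
  assumes "t \<noteq> 0" "K \<noteq> 0" "K = r + 1"
  shows "(T + r * T) * (L * L / K - 2 * L / (K * K) + 2 / K ^ 3) +
     (2 * L / (t * K) - (2 * r + 2) / (t * (K * (K * K)))) * (t * T) = L * L * T"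
proof -
  have r: "r = K - 1" using assms(3) by simp
  show ?thesis using assms(1,2) unfolding r
    by (simp add: field_simps power3_eq_cube; algebra)
qed

lemma FF_deriv:
  assumes "t > 0"
  shows "(FF k has_real_derivative (ln t)^2 * t^k) (at t)"
proof -
  have c: "real k + 1 \<noteq> 0" by simp
  have p: "real k * t^(k - Suc 0) * t = real k * t^k" by (cases k) auto
  show ?thesis unfolding FF_def
    using assms apply (auto intro!: derivative_eq_intros simp: power2_eq_square)
    unfolding p by (rule FF_alg) (use assms in auto)
qed

lemma FF_lim0: "(FF k \<longlongrightarrow> 0) (at_right 0)"
proof -
  have l1: "((\<lambda>t::real. t * (ln t)^2) \<longlongrightarrow> 0) (at_right 0)" by real_asymp
  have l2: "((\<lambda>t::real. t * ln t) \<longlongrightarrow> 0) (at_right 0)" by real_asymp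
  have l3: "((\<lambda>t::real. t) \<longlongrightarrow> 0) (at_right 0)" by real_asymp
  have l4: "((\<lambda>t::real. t ^ k) \<longlongrightarrow> 0 ^ k) (at_right 0)"
    by (intro tendsto_intros)
  have "((\<lambda>t. t ^ k * ((t * (ln t)^2) / (real k + 1) - 2 * (t * ln t) / (real k + 1)^2 + 2 * t / (real k + 1)^3))
      \<longlongrightarrow> 0 ^ k * (0 / (real k + 1) - 2 * 0 / (real k + 1)^2 + 2 * 0 / (real k + 1)^3)) (at_right 0)"
    by (intro tendsto_intros l1 l2 l3 l4) auto
  then have "((\<lambda>t. t ^ k * ((t * (ln t)^2) / (real k + 1) - 2 * (t * ln t) / (real k + 1)^2 + 2 * t / (real k + 1)^3))
      \<longlongrightarrow> 0) (at_right 0)" by simp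
  moreover have "\<And>t. t ^ k * ((t * (ln t)^2) / (real k + 1) - 2 * (t * ln t) / (real k + 1)^2 + 2 * t / (real k + 1)^3) = FF k t"
    unfolding FF_def by (simp add: algebra_simps)
  ultimately show ?thesis by simp
qed

lemma FF_0: "FF k 0 = 0" unfolding FF_def by simp
lemma FF_1: "FF k 1 = 2 / (real k + 1)^3" unfolding FF_def by simp

lemma FF_cont: "continuous_on {0..1} (FF k)"
proof (rule continuous_on_IccI)
  show "(FF k \<longlongrightarrow> FF k 0) (at_right 0)" using FF_lim0 FF_0 by simp
  show "(FF k \<longlongrightarrow> FF k 1) (at_left 1)"
    using DERIV_isCont[OF FF_deriv[of 1 k]] by (simp add: isCont_def filterlim_at_split)
  fix x :: real assume "0 < x" "x < 1"
  then show "FF k \<midarrow>x\<rightarrow> FF k x"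
    using DERIV_isCont[OF FF_deriv[of x k]] by (simp add: isCont_def)
qed simp


lemma legendre_shift2: "legendre n (2 * x - 1) = (\<Sum>k\<le>n. aa n k * (1 - x)^k)"
proof -
  have "2 * x - 1 = 1 - 2 * (1 - x)" by simp
  then show ?thesis unfolding aa_def using legendre_sum[of n "1 - x"] by simp
qed

theorem mainTheorem6:
  fixes n :: nat
  assumes "n \<ge> 1"
  shows "((\<lambda>x. (ln (1 - x))\<^sup>2 * legendre n (2 * x - 1)) has_integral
           ((4 * real n + 2) / ((real n)\<^sup>2 * (real n + 1)\<^sup>2)
            + 4 * harm (n - 1) / (real n * (real n + 1)))) {0..1}"
proof -
  define \<Phi> where "\<Phi> = (\<lambda>x. - (\<Sum>k\<le>n. aa n k * FF k (1 - x)))"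
  have cont: "continuous_on {0..1} \<Phi>"
  proof -
    have "\<And>k. continuous_on {0..1} (\<lambda>x. FF k (1 - x))"
      by (rule continuous_on_compose2[OF FF_cont[of _]]) (auto intro!: continuous_intros)
    then show ?thesis unfolding \<Phi>_def by (intro continuous_intros) auto
  qed
  have der: "(\<Phi> has_vector_derivative (ln (1 - x))\<^sup>2 * legendre n (2 * x - 1)) (at x)"
    if x: "x \<in> {0<..<1}" for x
  proof -
    have dk: "\<And>k. ((\<lambda>x. FF k (1 - x)) has_real_derivative ((ln (1 - x))^2 * (1 - x)^k) * (-1)) (at x)"
    proof -
      fix k
      have dg: "((\<lambda>x. 1 - x) has_real_derivative -1) (at x)"
        by (auto intro!: derivative_eq_intros)
      have df: "(FF k has_real_derivative (ln (1 - x))^2 * (1 - x)^k) (at ((\<lambda>x. 1 - x) x))"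
        using FF_deriv[of "1 - x" k] x by auto
      show "((\<lambda>x. FF k (1 - x)) has_real_derivative ((ln (1 - x))^2 * (1 - x)^k) * (-1)) (at x)"
        using DERIV_chain2[where f="FF k" and g="\<lambda>x. 1 - x", OF df dg] by simp
    qed
    then have "(\<Phi> has_real_derivative - (\<Sum>k\<le>n. aa n k * (((ln (1 - x))^2 * (1 - x)^k) * (-1)))) (at x)"
      unfolding \<Phi>_def by (intro DERIV_minus DERIV_sum DERIV_cmult dk)
    moreover have "- (\<Sum>k\<le>n. aa n k * (((ln (1 - x))^2 * (1 - x)^k) * (-1))) = (ln (1 - x))\<^sup>2 * legendre n (2 * x - 1)"
      unfolding legendre_shift2 by (simp add: sum_distrib_left sum_negf algebra_simps)
    ultimately show ?thesis by (simp add: has_real_derivative_iff_has_vector_derivative)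
  qed
  have I: "((\<lambda>x. (ln (1 - x))\<^sup>2 * legendre n (2 * x - 1)) has_integral (\<Phi> 1 - \<Phi> 0)) {0..1}"
    by (rule fundamental_theorem_of_calculus_interior[OF _ cont der]) auto
  have v: "\<Phi> 1 - \<Phi> 0 = 2 * TT n"
    unfolding \<Phi>_def TT_def by (simp add: FF_0 FF_1 sum_distrib_left mult.commute)
  obtain m where m: "n = Suc m" using assms by (cases n) auto
  have "2 * TT n = (4 * real n + 2) / ((real n)\<^sup>2 * (real n + 1)\<^sup>2)
            + 4 * harm (n - 1) / (real n * (real n + 1))"
    unfolding m TT_closed by (simp add: algebra_simps add_divide_distrib)
  then show ?thesis using I v by simp
qed

end
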